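(* Let $n,m,t$ be positive integers. There is a map $\Phi:[n]^n\to[n]^n$ with the following property. Let $\sigma\in\mathcal{S}_n$, let $I\subseteq[n]$ be a set of $t$ positions with $\sigma(i)>m$ for all $i\in I$, and let $\sigma_e$ be given by $\sigma_e(i)=\sigma(i)-1$ for $i\in I$ and $\sigma_e(i)=\sigma(i)$ for $i\notin I$. Then $\hat\sigma=\Phi(\sigma_e)$ satisfies: there exist $\ell\le t$ and distinct positions $i_1,\ldots,i_\ell\in[n]$ with $\sigma(i_j)>m$ for all $j\in[\ell]$ and $\sigma(i_j)\le\sigma(i_{j+1})-2$ for all $j\in[\ell-1]$, such that $\hat\sigma(i)=\sigma(i)-1$ for $i\in\{i_1,\ldots,i_\ell\}$ and $\hat\sigma(i)=\sigma(i)$ for all other $i\in[n]$.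
   Context: $[n]=\{1,\ldots,n\}$ and $\mathcal{S}_n$ is the set of permutations of $[n]$, written as sequences $(\sigma(1),\ldots,\sigma(n))$. *)

theory Defs
  imports "HOL-Combinatorics.Permutations" "HOL-Library.FuncSet"
begin

end

theory Submission
  imports Defs
begin

definition cnt :: "nat \<Rightarrow> (nat \<Rightarrow> nat) \<Rightarrow> nat \<Rightarrow> nat" where
  "cnt n f w = card {i\<in>{1..n}. f i = w}"

definition PP :: "nat \<Rightarrow> (nat \<Rightarrow> nat) \<Rightarrow> nat \<Rightarrow> bool" where
  "PP n f w = (\<exists>d<w. 2 \<le> cnt n f d \<and> (\<forall>x. d < x \<and> x \<le> w \<longrightarrow> cnt n f x = 1))"

definition Phi :: "nat \<Rightarrow> (nat \<Rightarrow> nat) \<Rightarrow> nat \<Rightarrow> nat" where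
  "Phi n f = restrict (\<lambda>i. if PP n f (f i) then min (f i + 1) n else f i) {1..n}"

lemma cnt_formula:
  assumes p: "\<sigma> permutes {1..n}" and I: "I \<subseteq> {1..n}"
  shows "cnt n (restrict (\<lambda>i. if i\<in>I then \<sigma> i - 1 else \<sigma> i) {1..n}) w =
     (if w\<in>{1..n} \<and> w \<notin> \<sigma>`I then 1 else 0) + (if w+1 \<in> \<sigma>`I then 1 else 0)"
proof -
  let ?A = "{i\<in>{1..n}. i\<notin>I \<and> \<sigma> i = w}"
  let ?B = "{i\<in>I. \<sigma> i = w+1}"
  have inj: "inj \<sigma>" using p permutes_inj by blast
  have rng: "\<And>i. i \<in> {1..n} \<Longrightarrow> \<sigma> i \<in> {1..n}" by (simp only: permutes_in_image[OF p])
  have eq: "{i\<in>{1..n}. restrict (\<lambda>i. if i\<in>I then \<sigma> i - 1 else \<sigma> i) {1..n} i = w} = ?A \<union> ?B"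
  proof -
    have "\<And>i. i \<in> {1..n} \<Longrightarrow> (\<sigma> i - 1 = w) = (\<sigma> i = w + 1)"
      using rng by fastforce
    then show ?thesis using I by auto
  qed
  have cA: "card ?A = (if w\<in>{1..n} \<and> w \<notin> \<sigma>`I then 1 else 0)"
  proof (cases "w\<in>{1..n} \<and> w \<notin> \<sigma>`I")
    case True
    have "?A = {inv \<sigma> w}"
    proof
      show "?A \<subseteq> {inv \<sigma> w}" using inj by (auto simp: inv_f_f)
      have "inv \<sigma> w \<in> {1..n}" using True
        by (simp only: permutes_in_image[OF permutes_inv[OF p]])
      moreover have "\<sigma> (inv \<sigma> w) = w" using p permutes_inverses(1) by fastforce
      ultimately show "{inv \<sigma> w} \<subseteq> ?A" using True by force
    qed
    then show ?thesis using True by simp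
  next
    case False
    have "?A = {}" using False rng inj by (auto simp: inj_eq)
    then have "card ?A = 0" by (simp only: card.empty)
    then show ?thesis by (simp only: False if_False)
  qed
  have cB: "card ?B = (if w+1 \<in> \<sigma>`I then 1 else 0)"
  proof (cases "w+1 \<in> \<sigma>`I")
    case True
    then obtain j where j: "j \<in> I" "\<sigma> j = w+1" by auto
    have uj: "\<And>x. \<sigma> x = w + 1 \<Longrightarrow> x = j" using inj j(2) by (metis injD)
    have "?B = {j}" using j uj by blast
    then show ?thesis using True by simp
  next
    case False
    have "?B = {}" using False by (auto simp del: One_nat_def) (metis imageI)
    then have "card ?B = 0" by (simp only: card.empty)
    then show ?thesis by (simp only: False if_False)
  qed
  have fA: "finite ?A" by (rule finite_subset[of _ "{1..n}"]) auto
  have "?B \<subseteq> {1..n}" using I by auto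
  then have fB: "finite ?B" by (rule finite_subset) simp
  have dj: "?A \<inter> ?B = {}" by auto
  have "card (?A \<union> ?B) = card ?A + card ?B"
    by (rule card_Un_disjoint[OF fA fB dj])
  then show ?thesis unfolding cnt_def eq cA cB by simp
qed

lemma chain:
  fixes d w :: nat
  assumes "\<And>x. d < x \<Longrightarrow> x \<le> w \<Longrightarrow> x \<in> S \<Longrightarrow> x < w \<Longrightarrow> x + 1 \<in> S"
    and "d + 1 \<in> S" and "d < w"
  shows "w \<in> S"
proof -
  have "\<forall>x. d < x \<and> x \<le> d + 1 + k \<and> x \<le> w \<longrightarrow> x \<in> S" for k
  proof (induction k)
    case 0
    show ?case
    proof (intro allI impI)
      fix x assume "d < x \<and> x \<le> d + 1 + 0 \<and> x \<le> w"
      then have "x = d + 1" by simp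
      then show "x \<in> S" using assms(2) by simp
    qed
  next
    case (Suc k)
    show ?case
    proof (intro allI impI)
      fix x assume x: "d < x \<and> x \<le> d + 1 + Suc k \<and> x \<le> w"
      show "x \<in> S"
      proof (cases "x \<le> d + 1 + k")
        case True then show ?thesis using Suc x by blast
      next
        case False
        then have xe: "x = d + 1 + k + 1" using x by simp
        have h: "d + 1 + k \<in> S" using Suc.IH xe x by simp
        have "d + 1 + k + 1 \<in> S"
          by (rule assms(1)[OF _ _ h]) (use xe x in simp_all)
        then show ?thesis using xe by simp
      qed
    qed
  qed
  from this[of "w - d - 1", rule_format, of w] show ?thesis using assms(3) by simp
qed


lemma Phi_val:
  assumes p: "\<sigma> permutes {1..n}" and I: "I \<subseteq> {1..n}" and big: "\<forall>i\<in>I. \<sigma> i > m"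
    and m: "m > 0" and i: "i \<in> {1..n}"
  shows "Phi n (restrict (\<lambda>i. if i\<in>I then \<sigma> i - 1 else \<sigma> i) {1..n}) i =
    (if i \<in> I \<and> \<sigma> i - 1 \<notin> \<sigma>`I then \<sigma> i - 1 else \<sigma> i)"
proof -
  define f where "f = restrict (\<lambda>i. if i\<in>I then \<sigma> i - 1 else \<sigma> i) {1..n}"
  define S where "S = \<sigma>`I"
  have c: "\<And>w. cnt n f w = (if w\<in>{1..n} \<and> w \<notin> S then 1 else 0) + (if w+1 \<in> S then 1 else 0)"
    unfolding f_def S_def by (rule cnt_formula[OF p I])
  have inj: "inj \<sigma>" using p permutes_inj by blast
  have rng: "\<And>i. i \<in> {1..n} \<Longrightarrow> \<sigma> i \<in> {1..n}" by (simp only: permutes_in_image[OF p])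
  have Sn: "\<And>x. x \<in> S \<Longrightarrow> x \<in> {1..n} \<and> x > m" using I rng big unfolding S_def by auto
  have key1: "w \<in> S" if "PP n f w" for w
  proof -
    obtain d where d: "d < w" "2 \<le> cnt n f d" "\<And>x. d < x \<Longrightarrow> x \<le> w \<Longrightarrow> cnt n f x = 1"
      using \<open>PP n f w\<close> unfolding PP_def by blast
    have d1: "d + 1 \<in> S"
    proof (rule ccontr)
      assume "d + 1 \<notin> S"
      then have "cnt n f d \<le> 1" using c[of d] by simp
      then show False using d(2) by simp
    qed
    show ?thesis
    proof (rule chain[OF _ d1 d(1)])
      fix x assume "d < x" "x \<le> w" "x \<in> S" "x < w"
      then have "cnt n f x = 1" using d(3) by blast
      moreover have "cnt n f x = (if x + 1 \<in> S then 1 else 0)" using c[of x] \<open>x \<in> S\<close> by simp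
      ultimately show "x + 1 \<in> S" by (metis zero_neq_one)
    qed
  qed
  have fi: "f i = (if i \<in> I then \<sigma> i - 1 else \<sigma> i)" using i unfolding f_def by simp
  have Phii: "Phi n f i = (if PP n f (f i) then min (f i + 1) n else f i)"
    using i unfolding Phi_def by simp
  have si: "\<sigma> i \<in> {1..n}" using rng i by blast
  have "Phi n f i = (if i \<in> I \<and> \<sigma> i - 1 \<notin> S then \<sigma> i - 1 else \<sigma> i)"
  proof (cases "i \<in> I")
    case False
    have "\<sigma> i \<notin> S"
    proof
      assume "\<sigma> i \<in> S"
      then obtain j where "j \<in> I" "\<sigma> i = \<sigma> j" unfolding S_def by auto
      then have "i = j" using inj by (metis injD)
      then show False using False \<open>j \<in> I\<close> by simp
    qed
    then have "\<not> PP n f (f i)" using key1 fi False by auto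
    then show ?thesis using Phii fi False by simp
  next
    case iI: True
    show ?thesis
    proof (cases "\<sigma> i - 1 \<in> S")
      case False
      then have "\<not> PP n f (f i)" using key1 fi iI by auto
      then show ?thesis using Phii fi iI False by simp
    next
      case True
      define w where "w = \<sigma> i - 1"
      have wS: "w \<in> S" using True w_def by simp
      have sS: "\<sigma> i \<in> S" using iI unfolding S_def by simp
      have w1: "w + 1 = \<sigma> i" using si w_def by simp
      define D where "D = {d. d < w \<and> d \<notin> S}"
      have "0 \<in> D" unfolding D_def using Sn wS m by fastforce
      have finD: "finite D" unfolding D_def by simp
      define d where "d = Max D"
      have dD: "d \<in> D" unfolding d_def using finD \<open>0 \<in> D\<close> by (intro Max_in) auto
      have dmax: "\<And>x. x \<in> D \<Longrightarrow> x \<le> d" unfolding d_def using finD by simp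
      have inS: "x \<in> S" if "d < x" "x \<le> w" for x
      proof (rule ccontr)
        assume "x \<notin> S"
        then have "x \<noteq> w" using wS by auto
        then have "x \<in> D" using that \<open>x \<notin> S\<close> unfolding D_def by simp
        then show False using dmax that by fastforce
      qed
      have dw: "d < w" "d \<notin> S" using dD unfolding D_def by auto
      have d1: "d + 1 \<in> S" using inS dw by simp
      have "d + 1 > m" using Sn d1 by blast
      moreover have "w \<le> n" using Sn wS by simp
      ultimately have dn: "d \<in> {1..n}" using m dw by simp
      have cd: "cnt n f d = 2" using c[of d] dn dw d1 by simp
      have cx: "cnt n f x = 1" if "d < x" "x \<le> w" for x
      proof -
        have "x \<in> S" using inS that by blast
        moreover have "x + 1 \<in> S"
        proof (cases "x = w")
          case True then show ?thesis using w1 sS by simp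
        next
          case False then show ?thesis using inS that by simp
        qed
        ultimately show ?thesis using c[of x] by simp
      qed
      have "PP n f w" unfolding PP_def using dw(1) cd cx by auto
      then have "Phi n f i = min (w + 1) n" using Phii fi iI w_def by simp
      also have "\<dots> = \<sigma> i" using w1 si by simp
      finally show ?thesis using True iI by simp
    qed
  qed
  then show ?thesis unfolding f_def S_def .
qed

theorem lemma2:
  fixes n m t :: nat
  assumes "n > 0" and "m > 0" and "t > 0"
  shows "\<exists>\<Phi> :: (nat \<Rightarrow> nat) \<Rightarrow> (nat \<Rightarrow> nat).
    (\<forall>f \<in> {1..n} \<rightarrow>\<^sub>E {1..n}. \<Phi> f \<in> {1..n} \<rightarrow>\<^sub>E {1..n}) \<and>
    (\<forall>\<sigma> I. \<sigma> permutes {1..n} \<longrightarrow> I \<subseteq> {1..n} \<longrightarrow> card I = t \<longrightarrow>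
       (\<forall>i\<in>I. \<sigma> i > m) \<longrightarrow>
       (let \<sigma>e = restrict (\<lambda>i. if i \<in> I then \<sigma> i - 1 else \<sigma> i) {1..n} in
        \<exists>l ix. l \<le> t \<and> inj_on ix {1..l} \<and> ix ` {1..l} \<subseteq> {1..n} \<and>
          (\<forall>j\<in>{1..l}. \<sigma> (ix j) > m) \<and>
          (\<forall>j\<in>{1..<l}. \<sigma> (ix j) + 2 \<le> \<sigma> (ix (j + 1))) \<and>
          (\<forall>i\<in>{1..n}. \<Phi> \<sigma>e i = (if i \<in> ix ` {1..l} then \<sigma> i - 1 else \<sigma> i))))"
proof (intro exI[of _ "Phi n"] conjI ballI allI impI)
  fix f :: "nat \<Rightarrow> nat" assume f: "f \<in> {1..n} \<rightarrow>\<^sub>E {1..n}"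
  have "\<And>i. i \<in> {1..n} \<Longrightarrow> f i \<in> {1..n}" using f by auto
  then show "Phi n f \<in> {1..n} \<rightarrow>\<^sub>E {1..n}"
    unfolding Phi_def using assms(1) by (auto simp: PiE_iff)
next
  fix \<sigma> :: "nat \<Rightarrow> nat" and I :: "nat set"
  assume p: "\<sigma> permutes {1..n}" and I: "I \<subseteq> {1..n}" and cI: "card I = t"
    and big: "\<forall>i\<in>I. \<sigma> i > m"
  define S where "S = \<sigma>`I"
  define J where "J = {i\<in>I. \<sigma> i - 1 \<notin> S}"
  define xs where "xs = sorted_list_of_set (\<sigma>`J)"
  define l where "l = length xs"
  define ix where "ix = (\<lambda>j. inv \<sigma> (xs ! (j - 1)))"
  have finI: "finite I" using I finite_subset by blast
  have finJ: "finite J" using finI unfolding J_def by simp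
  have setxs: "set xs = \<sigma>`J" unfolding xs_def using finJ by simp
  have sxs: "sorted_wrt (<) xs" unfolding xs_def by simp
  have dxs: "distinct xs" unfolding xs_def by simp
  have sinv: "\<And>y. \<sigma> (inv \<sigma> y) = y" using p permutes_inverses(1) by fastforce
  have invs: "\<And>y. inv \<sigma> (\<sigma> y) = y" using p permutes_inverses(2) by fastforce
  have "l = card (\<sigma>`J)" unfolding l_def xs_def using finJ by simp
  also have "\<dots> \<le> card J" using finJ by (rule card_image_le)
  also have "\<dots> \<le> card I" using finI unfolding J_def by (intro card_mono) auto
  finally have lt: "l \<le> t" using cI by simp
  have xj: "xs ! (j - 1) \<in> \<sigma>`J" if "j \<in> {1..l}" for j
    using that setxs l_def by (metis atLeastAtMost_iff diff_less less_le_trans nat_less_le nth_mem zero_less_one)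
  have sig_ix: "\<sigma> (ix j) = xs ! (j - 1)" for j unfolding ix_def by (simp add: sinv)
  have ixJ: "ix j \<in> J" if "j \<in> {1..l}" for j
    using xj[OF that] unfolding ix_def by (auto simp: invs)
  have img: "ix ` {1..l} = J"
  proof
    show "ix ` {1..l} \<subseteq> J" using ixJ by blast
    show "J \<subseteq> ix ` {1..l}"
    proof
      fix k assume "k \<in> J"
      then have "\<sigma> k \<in> set xs" using setxs by simp
      then obtain q where q: "q < l" "xs ! q = \<sigma> k" unfolding l_def by (metis in_set_conv_nth)
      have "ix (q + 1) = k" unfolding ix_def using q invs by simp
      moreover have "q + 1 \<in> {1..l}" using q by simp
      ultimately show "k \<in> ix ` {1..l}" by (metis imageI)
    qed
  qed
  show "let \<sigma>e = restrict (\<lambda>i. if i \<in> I then \<sigma> i - 1 else \<sigma> i) {1..n} in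
        \<exists>l ix. l \<le> t \<and> inj_on ix {1..l} \<and> ix ` {1..l} \<subseteq> {1..n} \<and>
          (\<forall>j\<in>{1..l}. \<sigma> (ix j) > m) \<and>
          (\<forall>j\<in>{1..<l}. \<sigma> (ix j) + 2 \<le> \<sigma> (ix (j + 1))) \<and>
          (\<forall>i\<in>{1..n}. Phi n \<sigma>e i = (if i \<in> ix ` {1..l} then \<sigma> i - 1 else \<sigma> i))"
    unfolding Let_def
  proof (intro exI[of _ l] exI[of _ ix] conjI ballI)
    show "l \<le> t" by (rule lt)
    show "inj_on ix {1..l}"
    proof (rule inj_onI)
      fix a b assume a: "a \<in> {1..l}" and b: "b \<in> {1..l}" and e: "ix a = ix b"
      then have "xs ! (a - 1) = xs ! (b - 1)" using sig_ix by metis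
      moreover have "a - 1 < length xs" "b - 1 < length xs" using a b l_def by auto
      ultimately have "a - 1 = b - 1" using dxs by (metis nth_eq_iff_index_eq)
      moreover have "1 \<le> a" "1 \<le> b" using a b by auto
      ultimately show "a = b" by arith
    qed
    show "ix ` {1..l} \<subseteq> {1..n}" using img I unfolding J_def by auto
    show "\<sigma> (ix j) > m" if "j \<in> {1..l}" for j using ixJ[OF that] big unfolding J_def by auto
    show "\<sigma> (ix j) + 2 \<le> \<sigma> (ix (j + 1))" if j: "j \<in> {1..<l}" for j
    proof -
      have lt2: "xs ! (j - 1) < xs ! j" using sorted_wrt_nth_less[OF sxs, of "j - 1" j] j unfolding l_def
        by auto
      have "j + 1 \<in> {1..l}" using j by simp
      then have "ix (j + 1) \<in> J" by (rule ixJ)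
      then have b: "xs ! j - 1 \<notin> S" using sig_ix[of "j+1"] unfolding J_def by simp
      have "j \<in> {1..l}" using j by simp
      then have "ix j \<in> J" by (rule ixJ)
      then have a: "xs ! (j - 1) \<in> S" using sig_ix[of j] unfolding J_def S_def by force
      have "xs ! (j - 1) \<noteq> xs ! j - 1" using a b by metis
      then show ?thesis using lt2 sig_ix[of j] sig_ix[of "j+1"] by simp
    qed
    show "Phi n (restrict (\<lambda>i. if i \<in> I then \<sigma> i - 1 else \<sigma> i) {1..n}) i =
        (if i \<in> ix ` {1..l} then \<sigma> i - 1 else \<sigma> i)" if "i \<in> {1..n}" for i
      using Phi_val[OF p I big assms(2) that] img unfolding J_def S_def by simp
  qed
qed

end
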